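(* Let $p\ge 1$ be an integer. (i) For all $x\in[0,1]^p, y\in\{0,1\}^p$, and for all $x\in\{0,1\}^p, y\in[0,1]^p$, one has $\overline{\Delta}_{\mathrm{JML1}}(x,y)=\overline{\Delta}_{\mathrm{JML2}}(x,y)=\overline{\Delta}_{\mathrm{SJL},L^1}(x,y)$. (ii) For all $x,y\in[0,1]^p$, $\overline{\Delta}_{\mathrm{JML1},L^2}(x,y)=\overline{\Delta}_{\mathrm{JML2},L^2}(x,y)=\overline{\Delta}_{\mathrm{SJL},L^2}(x,y)$. (iii) There exist $x,y\in[0,1]^p$ with $\overline{\Delta}_{\mathrm{JML1}}(x,y)\neq\overline{\Delta}_{\mathrm{JML2}}(x,y)$ and $\overline{\Delta}_{\mathrm{JML2}}(x,y)\neq\overline{\Delta}_{\mathrm{SJL},L^1}(x,y)$.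
   Context: For $x,y \in [0,1]^p$ write $\|x\|_1=\sum_{i=1}^p |x_i|$, $\|x\|_2^2=\sum_{i=1}^p x_i^2$ and $\langle x,y\rangle=\sum_{i=1}^p x_iy_i$. Define, for $x,y\in[0,1]^p$: $\overline{\Delta}_{\mathrm{JML1}}(x,y) = 1 - \frac{\|x\|_1+\|y\|_1-\|x-y\|_1}{\|x\|_1+\|y\|_1+\|x-y\|_1}$, $\overline{\Delta}_{\mathrm{JML2}}(x,y) = 1 - \frac{\langle x,y\rangle}{\langle x,y\rangle+\|x-y\|_1}$, $\overline{\Delta}_{\mathrm{SJL},L^1}(x,y) = 1 - \frac{\langle x,y\rangle}{\|x\|_1+\|y\|_1-\langle x,y\rangle}$, $\overline{\Delta}_{\mathrm{JML1},L^2}(x,y) = 1 - \frac{\|x\|_2^2+\|y\|_2^2-\|x-y\|_2^2}{\|x\|_2^2+\|y\|_2^2+\|x-y\|_2^2}$, $\overline{\Delta}_{\mathrm{JML2},L^2}(x,y) = 1 - \frac{\langle x,y\rangle}{\langle x,y\rangle+\|x-y\|_2^2}$, $\overline{\Delta}_{\mathrm{SJL},L^2}(x,y) = 1 - \frac{\langle x,y\rangle}{\|x\|_2^2+\|y\|_2^2-\langle x,y\rangle}$. All these denominators vanish only when $x=y=0$; by convention each of these functions takes the value $0$ at $(x,y)=(0,0)$. *)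

theory Defs
  imports "HOL-Analysis.Analysis"
begin

text \<open>Vectors in [0,1]^p are modelled as elements of real^'n where the finite
index type 'n has cardinality p (so p \<ge> 1 automatically).\<close>

definition unit_cube :: "(real^'n) set" where
  "unit_cube = {x. \<forall>i. 0 \<le> x$i \<and> x$i \<le> 1}"

definition binary_cube :: "(real^'n) set" where
  "binary_cube = {x. \<forall>i. x$i = 0 \<or> x$i = 1}"

definition l1norm :: "real^'n \<Rightarrow> real" where
  "l1norm x = (\<Sum>i\<in>UNIV. \<bar>x$i\<bar>)"

definition sqnorm2 :: "real^'n \<Rightarrow> real" where
  "sqnorm2 x = (\<Sum>i\<in>UNIV. (x$i)^2)"

definition ip :: "real^'n \<Rightarrow> real^'n \<Rightarrow> real" where
  "ip x y = (\<Sum>i\<in>UNIV. x$i * y$i)"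

definition dJML1 :: "real^'n \<Rightarrow> real^'n \<Rightarrow> real" where
  "dJML1 x y = (if x = 0 \<and> y = 0 then 0 else
     1 - (l1norm x + l1norm y - l1norm (x - y)) / (l1norm x + l1norm y + l1norm (x - y)))"

definition dJML2 :: "real^'n \<Rightarrow> real^'n \<Rightarrow> real" where
  "dJML2 x y = (if x = 0 \<and> y = 0 then 0 else
     1 - ip x y / (ip x y + l1norm (x - y)))"

definition dSJL_L1 :: "real^'n \<Rightarrow> real^'n \<Rightarrow> real" where
  "dSJL_L1 x y = (if x = 0 \<and> y = 0 then 0 else
     1 - ip x y / (l1norm x + l1norm y - ip x y))"

definition dJML1_L2 :: "real^'n \<Rightarrow> real^'n \<Rightarrow> real" where
  "dJML1_L2 x y = (if x = 0 \<and> y = 0 then 0 else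
     1 - (sqnorm2 x + sqnorm2 y - sqnorm2 (x - y)) / (sqnorm2 x + sqnorm2 y + sqnorm2 (x - y)))"

definition dJML2_L2 :: "real^'n \<Rightarrow> real^'n \<Rightarrow> real" where
  "dJML2_L2 x y = (if x = 0 \<and> y = 0 then 0 else
     1 - ip x y / (ip x y + sqnorm2 (x - y)))"

definition dSJL_L2 :: "real^'n \<Rightarrow> real^'n \<Rightarrow> real" where
  "dSJL_L2 x y = (if x = 0 \<and> y = 0 then 0 else
     1 - ip x y / (sqnorm2 x + sqnorm2 y - ip x y))"

end

theory Submission
  imports Defs
begin

lemma coord1:
  fixes a b :: real
  assumes "(0 \<le> a \<and> a \<le> 1 \<and> (b = 0 \<or> b = 1)) \<or> (0 \<le> b \<and> b \<le> 1 \<and> (a = 0 \<or> a = 1))"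
  shows "\<bar>a\<bar> + \<bar>b\<bar> - \<bar>a - b\<bar> = 2 * (a * b)"
    and "\<bar>a\<bar> + \<bar>b\<bar> + \<bar>a - b\<bar> = 2 * (\<bar>a\<bar> + \<bar>b\<bar> - a * b)"
    and "a * b + \<bar>a - b\<bar> = \<bar>a\<bar> + \<bar>b\<bar> - a * b"
  using assms by auto

lemma part1:
  fixes x y :: "real^'n"
  assumes "(x \<in> unit_cube \<and> y \<in> binary_cube) \<or> (x \<in> binary_cube \<and> y \<in> unit_cube)"
  shows "dJML1 x y = dJML2 x y \<and> dJML2 x y = dSJL_L1 x y"
proof -
  have c: "\<And>i. (0 \<le> x$i \<and> x$i \<le> 1 \<and> (y$i = 0 \<or> y$i = 1)) \<or> (0 \<le> y$i \<and> y$i \<le> 1 \<and> (x$i = 0 \<or> x$i = 1))"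
    using assms unfolding unit_cube_def binary_cube_def by auto
  have e1: "l1norm x + l1norm y - l1norm (x - y) = 2 * ip x y"
  proof -
    have "l1norm x + l1norm y - l1norm (x - y) = (\<Sum>i\<in>UNIV. \<bar>x$i\<bar> + \<bar>y$i\<bar> - \<bar>x$i - y$i\<bar>)"
      by (simp add: l1norm_def sum.distrib sum_subtractf)
    also have "\<dots> = (\<Sum>i\<in>UNIV. 2 * (x$i * y$i))" by (intro sum.cong refl) (rule coord1(1)[OF c])
    finally show ?thesis by (simp add: ip_def sum_distrib_left)
  qed
  have e2: "l1norm x + l1norm y + l1norm (x - y) = 2 * (l1norm x + l1norm y - ip x y)"
  proof -
    have "l1norm x + l1norm y + l1norm (x - y) = (\<Sum>i\<in>UNIV. \<bar>x$i\<bar> + \<bar>y$i\<bar> + \<bar>x$i - y$i\<bar>)"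
      by (simp add: l1norm_def sum.distrib)
    also have "\<dots> = (\<Sum>i\<in>UNIV. 2 * (\<bar>x$i\<bar> + \<bar>y$i\<bar> - x$i * y$i))" by (intro sum.cong refl) (rule coord1(2)[OF c])
    finally show ?thesis by (simp add: ip_def l1norm_def sum_distrib_left sum.distrib sum_subtractf)
  qed
  have e3: "ip x y + l1norm (x - y) = l1norm x + l1norm y - ip x y"
  proof -
    have "ip x y + l1norm (x - y) = (\<Sum>i\<in>UNIV. x$i * y$i + \<bar>x$i - y$i\<bar>)"
      by (simp add: l1norm_def ip_def sum.distrib)
    also have "\<dots> = (\<Sum>i\<in>UNIV. \<bar>x$i\<bar> + \<bar>y$i\<bar> - x$i * y$i)" by (intro sum.cong refl) (rule coord1(3)[OF c])
    finally show ?thesis by (simp add: ip_def l1norm_def sum.distrib sum_subtractf)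
  qed
  show ?thesis unfolding dJML1_def dJML2_def dSJL_L1_def e1 e2 e3 by (simp only: mult_divide_mult_cancel_left_if) simp
qed

lemma part2:
  fixes x y :: "real^'n"
  shows "dJML1_L2 x y = dJML2_L2 x y \<and> dJML2_L2 x y = dSJL_L2 x y"
proof -
  have s: "sqnorm2 (x - y) = sqnorm2 x + sqnorm2 y - 2 * ip x y"
    by (simp add: sqnorm2_def ip_def power2_diff sum.distrib sum_subtractf sum_distrib_left algebra_simps)
  have a: "sqnorm2 x + sqnorm2 y - sqnorm2 (x - y) = 2 * ip x y"
    and b: "sqnorm2 x + sqnorm2 y + sqnorm2 (x - y) = 2 * (sqnorm2 x + sqnorm2 y - ip x y)"
    and d: "ip x y + sqnorm2 (x - y) = sqnorm2 x + sqnorm2 y - ip x y" by (simp_all add: s)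
  show ?thesis unfolding dJML1_L2_def dJML2_L2_def dSJL_L2_def a b d by (simp only: mult_divide_mult_cancel_left_if) simp
qed

lemma part3: "\<exists>x y :: real^'n. x \<in> unit_cube \<and> y \<in> unit_cube \<and>
            dJML1 x y \<noteq> dJML2 x y \<and> dJML2 x y \<noteq> dSJL_L1 x y"
proof -
  define x :: "real^'n" where "x = (\<chi> i. 1/2)"
  define y :: "real^'n" where "y = (\<chi> i. 1/4)"
  define c where "c = real CARD('n)"
  have cp: "c > 0" unfolding c_def by simp
  have x0: "x \<noteq> 0" unfolding x_def by (metis vec_lambda_beta zero_index zero_neq_numeral divide_eq_0_iff one_neq_zero)
  have lx: "l1norm x = c/2" and ly: "l1norm y = c/4" and lxy: "l1norm (x - y) = c/4"
    and i: "ip x y = c/8"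
    by (simp_all add: l1norm_def ip_def x_def y_def c_def)
  have "dJML1 x y = 1/2" unfolding dJML1_def lx ly lxy using x0 cp by (simp add: field_simps)
  moreover have "dJML2 x y = 2/3" unfolding dJML2_def lxy i using x0 cp by (simp add: field_simps)
  moreover have "dSJL_L1 x y = 4/5" unfolding dSJL_L1_def lx ly i using x0 cp by (simp add: field_simps)
  moreover have "x \<in> unit_cube" "y \<in> unit_cube" by (simp_all add: unit_cube_def x_def y_def)
  ultimately show ?thesis by force
qed

theorem theorem2:
  shows "(\<forall>x y :: real^'n.
            ((x \<in> unit_cube \<and> y \<in> binary_cube) \<or> (x \<in> binary_cube \<and> y \<in> unit_cube)) \<longrightarrow>
            dJML1 x y = dJML2 x y \<and> dJML2 x y = dSJL_L1 x y)
       \<and> (\<forall>x y :: real^'n. x \<in> unit_cube \<and> y \<in> unit_cube \<longrightarrow>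
            dJML1_L2 x y = dJML2_L2 x y \<and> dJML2_L2 x y = dSJL_L2 x y)
       \<and> (\<exists>x y :: real^'n. x \<in> unit_cube \<and> y \<in> unit_cube \<and>
            dJML1 x y \<noteq> dJML2 x y \<and> dJML2 x y \<noteq> dSJL_L1 x y)"
  using part1 part2 part3 by blast

end
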